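(* Consider Algorithm SAVIC (described in the context) run with heterogeneous data and $M\ge2$. Suppose: (i) each $f_m$ is $\mu$-strongly convex and $L$-smooth; (ii) each $f_m(\cdot,z)$ is almost surely $L$-smooth and $\mu$-strongly convex; (iii) there are constants $0<\alpha\le\Gamma$ with $\alpha I\preceq D^0\preceq\Gamma I$ and $\alpha I\preceq H^t\preceq\Gamma I$ for all $t$. Then for any $\gamma\ge0$ and any $t$ with $t_p\le t\le t_{p+1}-1$, $$\mathbb E\|\hat x_{t+1}-x_*\|^2_{\hat D^{t_p}}\le\left(1-\frac{\gamma\mu}{\Gamma}\right)\|\hat x_t-x_*\|^2_{\hat D^{t_p}}+\frac{\gamma L}{\alpha}\left(1+\frac{2\gamma L}{\alpha}\right)V_t-2\gamma\left(1-\frac{4\gamma L}{\alpha}\right)D_f(\hat x_t,x_* )+\frac{4\gamma^2\sigma_{\mathrm{dif}}^2}{M\alpha}.$$ In particular, if $\gamma\le\frac{\alpha}{8L}$, then $$\mathbb E\|\hat x_{t+1}-x_*\|^2_{\hat D^{t_p}}\le\left(1-\frac{\gamma\mu}{\Gamma}\right)\|\hat x_t-x_*\|^2_{\hat D^{t_p}}+\frac{5\gamma L}{4\alpha}V_t-\gamma D_f(\hat x_t,x_* )+\frac{4\gamma^2\sigma_{\mathrm{dif}}^2}{M\alpha}.$$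
   Context: Problem: minimize $f(x)=\frac1M\sum_mf_m(x)$ over $\mathbb R^d$, $f_m(x)=\mathbb E_{z\sim\mathcal D_m}[f_m(x,z)]$, $x_*$ the solution; $\mu$-strong convexity and $L$-smoothness: $\frac{\mu}{2}\|x-y\|^2\le g(x)-g(y)-\langle\nabla g(y),x-y\rangle\le\frac{L}{2}\|x-y\|^2$. $\sigma_{\mathrm{dif}}^2=\frac1M\sum_m\mathbb E_{z_m\sim\mathcal D_m}\|\nabla f_m(x_*,z_m)\|^2$. $D_f(x,y)=f(x)-f(y)-\langle\nabla f(y),x-y\rangle$. $\|x\|_A^2=\langle x,Ax\rangle$. Preconditioner: diagonal $D^t$ from diagonal $D^0,H^t$ via $(D^t)^2=\beta_t(D^{t-1})^2+(1-\beta_t)(H^t)^2$ or $D^t=\beta_tD^{t-1}+(1-\beta_t)H^t$, $\beta_t\in[0,1]$; $(\hat D^t)_{ii}=\max\{\alpha,|D^t_{ii}|\}$. Algorithm SAVIC: stepsize $\gamma$, $x_0^m=x_0$, synchronization times $t_0=0<t_1<\dots$; at $t=t_p$ the matrix $\hat D^{t_p}$ is updated and used by all clients for $t_p\le t<t_{p+1}$; client $m$ samples $z_m\sim\mathcal D_m$ i.i.d. with $\mathbb E[\nabla f_m(x_t^m,z_m)\mid x_t^m]=\nabla f_m(x_t^m)$, and sets $x_{t+1}^m=\frac1M\sum_j(x_t^j-\gamma(\hat D^{t_p})^{-1}\nabla f_j(x_t^j,z_j))$ if $t=t_p$ for some $p$, else $x_{t+1}^m=x_t^m-\gamma(\hat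 D^{t_p})^{-1}\nabla f_m(x_t^m,z_m)$. Notation: $\hat x_t=\frac1M\sum_mx_t^m$; $V_t=\frac1M\sum_m\|x_t^m-\hat x_t\|^2_{\hat D^{t_p}}$ for $t_p\le t<t_{p+1}$. *)

theory Defs
  imports "HOL-Probability.Probability"
begin

definition sc_smooth :: "real \<Rightarrow> real \<Rightarrow> ('a::real_inner \<Rightarrow> real) \<Rightarrow> ('a \<Rightarrow> 'a) \<Rightarrow> bool" where
  "sc_smooth \<mu> L g G \<longleftrightarrow>
     (\<forall>x. (g has_derivative (\<lambda>h. G x \<bullet> h)) (at x)) \<and>
     (\<forall>x y. \<mu> / 2 * (norm (x - y))^2 \<le> g x - g y - G y \<bullet> (x - y) \<and>
            g x - g y - G y \<bullet> (x - y) \<le> L / 2 * (norm (x - y))^2)"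

text \<open>Diagonal matrices are represented by their diagonal vectors.\<close>
definition dnorm2 :: "real^'n \<Rightarrow> real^'n \<Rightarrow> real" where
  "dnorm2 A v = (\<Sum>i\<in>UNIV. A $ i * (v $ i)^2)"

definition dinv :: "real^'n \<Rightarrow> real^'n \<Rightarrow> real^'n" where
  "dinv A v = (\<chi> i. v $ i / A $ i)"

fun precond :: "bool \<Rightarrow> (nat \<Rightarrow> real) \<Rightarrow> real^'n \<Rightarrow> (nat \<Rightarrow> real^'n) \<Rightarrow> nat \<Rightarrow> real^'n" where
  "precond sq \<beta> D0 H 0 = D0"
| "precond sq \<beta> D0 H (Suc t) =
     (if sq then (\<chi> i. sqrt (\<beta> (Suc t) * (precond sq \<beta> D0 H t $ i)^2 + (1 - \<beta> (Suc t)) * (H (Suc t) $ i)^2))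
      else (\<chi> i. \<beta> (Suc t) * precond sq \<beta> D0 H t $ i + (1 - \<beta> (Suc t)) * H (Suc t) $ i))"

definition clip :: "real \<Rightarrow> real^'n \<Rightarrow> real^'n" where
  "clip \<alpha> D = (\<chi> i. max \<alpha> \<bar>D $ i\<bar>)"

text \<open>One SAVIC step for client m: given current iterates xs j, sampled stochastic gradients gs j,
  preconditioner Dh, and whether the current time is a synchronization time.\<close>
definition savic_next :: "real \<Rightarrow> real^'n \<Rightarrow> nat \<Rightarrow> bool \<Rightarrow> (nat \<Rightarrow> real^'n) \<Rightarrow> (nat \<Rightarrow> real^'n) \<Rightarrow> nat \<Rightarrow> real^'n" where
  "savic_next \<gamma> Dh M sync xs gs m =
     (if sync then (1 / real M) *\<^sub>R (\<Sum>j<M. xs j - \<gamma> *\<^sub>R dinv Dh (gs j))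
      else xs m - \<gamma> *\<^sub>R dinv Dh (gs m))"

definition avg :: "nat \<Rightarrow> (nat \<Rightarrow> real^'n) \<Rightarrow> real^'n" where
  "avg M xs = (1 / real M) *\<^sub>R (\<Sum>m<M. xs m)"

end

theory Submission
  imports Defs
begin

lemma pim_comp:
  fixes h :: "'z \<Rightarrow> 'b::{banach,second_countable_topology}"
  assumes P: "\<And>i. i \<in> I \<Longrightarrow> prob_space (N i)" and m: "m \<in> I" and int: "integrable (N m) h"
  shows "integrable (PiM I N) (\<lambda>x. h (x m))" "(\<integral>x. h (x m) \<partial>PiM I N) = integral\<^sup>L (N m) h"
proof -
  have d: "distr (PiM I N) (N m) (\<lambda>\<omega>. \<omega> m) = N m" by (rule distr_PiM_component[OF P m]) 
  have meas: "(\<lambda>\<omega>. \<omega> m) \<in> measurable (PiM I N) (N m)" using m by (rule measurable_component_singleton)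
  have hm: "h \<in> borel_measurable (N m)" using int by auto
  show "integrable (PiM I N) (\<lambda>x. h (x m))"
    using integrable_distr_eq[OF meas hm] int d by simp
  show "(\<integral>x. h (x m) \<partial>PiM I N) = integral\<^sup>L (N m) h"
    using integral_distr[OF meas hm] d by simp
qed

lemma pim_comp2:
  fixes ha hb :: "'z \<Rightarrow> real"
  assumes Pr: "\<And>i. i \<in> I \<Longrightarrow> prob_space (N i)" and fin: "finite I" and m: "m \<in> I" and j: "j \<in> I" and mj: "m \<noteq> j"
   and ia: "integrable (N m) ha" and ib: "integrable (N j) hb"
  shows "integrable (PiM I N) (\<lambda>x. ha (x m) * hb (x j))" "(\<integral>x. ha (x m) * hb (x j) \<partial>PiM I N) = integral\<^sup>L (N m) ha * integral\<^sup>L (N j) hb"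
proof -
  define N' where "N' = (\<lambda>i. if i \<in> I then N i else return (count_space UNIV) undefined)"
  have P': "prob_space (N' i)" for i using Pr by (auto simp: N'_def intro: prob_space_return)
  interpret product_prob_space N' 
    by (metis P' product_prob_space.intro product_prob_space_axioms.intro product_sigma_finite.intro prob_space_imp_sigma_finite)
  have eq: "PiM I N = PiM I N'" by (rule PiM_cong) (auto simp: N'_def)
  define f where "f = (\<lambda>i. if i = m then ha else if i = j then hb else (\<lambda>_. 1::real))"
  have fi: "integrable (N' i) (f i)" if "i \<in> I" for i
  proof -
    interpret pi: prob_space "N i" using Pr that by auto
    show ?thesis using ia ib that by (auto simp: f_def N'_def)
  qed
  have pe: "(\<Prod>i\<in>I. f i (x i)) = ha (x m) * hb (x j)" for x
  proof -
    have "(\<Prod>i\<in>I. f i (x i)) = (\<Prod>i\<in>I. (if i = m then ha (x i) else 1) * (if i = j then hb (x i) else 1))"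
      by (rule prod.cong) (auto simp: f_def mj)
    also have "\<dots> = ha (x m) * hb (x j)" using fin m j by (simp add: prod.distrib prod.delta)
    finally show ?thesis .
  qed
  show "integrable (PiM I N) (\<lambda>x. ha (x m) * hb (x j))"
    using product_integrable_prod[OF fin fi] unfolding eq pe by simp
  have "(\<integral>x. ha (x m) * hb (x j) \<partial>PiM I N) = (\<Prod>i\<in>I. integral\<^sup>L (N' i) (f i))"
    using product_integral_prod[OF fin fi] unfolding eq pe by simp
  also have "\<dots> = (\<Prod>i\<in>I. (if i = m then integral\<^sup>L (N m) ha else 1) * (if i = j then integral\<^sup>L (N j) hb else 1))"
    by (rule prod.cong) (auto simp: f_def mj N'_def Pr prob_space.prob_space)
  also have "\<dots> = integral\<^sup>L (N m) ha * integral\<^sup>L (N j) hb" using fin m j by (simp add: prod.distrib prod.delta)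
  finally show "(\<integral>x. ha (x m) * hb (x j) \<partial>PiM I N) = integral\<^sup>L (N m) ha * integral\<^sup>L (N j) hb" .
qed

lemma sc_L_ge:
  fixes g :: "real^'n \<Rightarrow> real"
  assumes "sc_smooth \<mu> L g G" shows "\<mu> \<le> L"
proof -
  let ?v = "(\<chi> i. 1) :: real^'n"
  have "?v \<noteq> 0" by (simp add: vec_eq_iff)
  hence n: "norm (?v - 0) > 0" by simp
  from assms have "\<mu> / 2 * (norm (?v - 0))^2 \<le> L / 2 * (norm (?v - 0))^2"
    unfolding sc_smooth_def by (meson order_trans)
  with n show ?thesis by (simp add: mult_le_cancel_right)
qed

lemma sc_cocoercive:
  fixes g :: "'a::real_inner \<Rightarrow> real"
  assumes sc: "sc_smooth \<mu> L g G" and mu: "0 \<le> \<mu>" and L: "0 < L"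
  shows "(norm (G x - G y))^2 \<le> 2 * L * (g x - g y - G y \<bullet> (x - y))"
proof -
  define d where "d = G x - G y"
  define z where "z = x - (1 / L) *\<^sub>R d"
  have low: "0 \<le> g z - g y - G y \<bullet> (z - y)"
    using sc mu unfolding sc_smooth_def by (meson order_trans zero_le_divide_iff zero_le_numeral mult_nonneg_nonneg zero_le_power2)
  have up: "g z - g x - G x \<bullet> (z - x) \<le> L / 2 * (norm (z - x))^2"
    using sc unfolding sc_smooth_def by blast
  have zx: "z - x = - ((1 / L) *\<^sub>R d)" by (simp add: z_def)
  have nz: "(norm (z - x))^2 = (norm d)^2 / L^2" using L by (simp add: zx power_divide)
  have i1: "G x \<bullet> (z - x) = - (G x \<bullet> d) / L" by (simp add: zx)
  have i2: "G y \<bullet> (z - y) = G y \<bullet> (x - y) - (G y \<bullet> d) / L"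
    by (simp add: z_def inner_diff_right algebra_simps)
  have dd: "G x \<bullet> d - G y \<bullet> d = (norm d)^2" by (simp add: d_def power2_norm_eq_inner inner_diff_left)
  have nz2: "L / 2 * (norm (z - x))^2 = (norm d)^2 / (2 * L)" unfolding nz using L by (simp add: power2_eq_square field_simps)
  from low up have "g y + G y \<bullet> (z - y) \<le> g x + G x \<bullet> (z - x) + L / 2 * (norm (z - x))^2" by linarith
  hence "g y + G y \<bullet> (x - y) - (G y \<bullet> d) / L \<le> g x - (G x \<bullet> d) / L + (norm d)^2 / (2 * L)"
    by (simp only: i1 i2 nz2)
  hence "(G x \<bullet> d - G y \<bullet> d) / L - (norm d)^2 / (2 * L) \<le> g x - g y - G y \<bullet> (x - y)"
    by (simp add: diff_divide_distrib)
  hence "(norm d)^2 / (2 * L) \<le> g x - g y - G y \<bullet> (x - y)" using L by (simp add: dd field_simps)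
  thus ?thesis using L unfolding d_def by (simp add: field_simps)
qed

lemma jensen_norm2:
  fixes v :: "nat \<Rightarrow> 'a::real_inner"
  assumes M: "0 < M"
  shows "(norm ((1 / real M) *\<^sub>R (\<Sum>m<M. v m)))^2 \<le> (1 / real M) * (\<Sum>m<M. (norm (v m))^2)"
proof -
  define c where "c = (1 / real M) *\<^sub>R (\<Sum>m<M. v m)"
  have sc: "(\<Sum>m<M. v m) = real M *\<^sub>R c" using M by (simp add: c_def)
  have "0 \<le> (\<Sum>m<M. (norm (v m - c))^2)" by (simp add: sum_nonneg)
  also have "\<dots> = (\<Sum>m<M. (norm (v m))^2 - 2 * (v m \<bullet> c) + (norm c)^2)"
    by (rule sum.cong) (auto simp: power2_norm_eq_inner inner_diff_left inner_diff_right inner_commute)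
  also have "\<dots> = (\<Sum>m<M. (norm (v m))^2) - 2 * ((\<Sum>m<M. v m) \<bullet> c) + real M * (norm c)^2"
    by (simp add: sum.distrib sum_subtractf sum_distrib_left inner_sum_left)
  also have "\<dots> = (\<Sum>m<M. (norm (v m))^2) - real M * (norm c)^2"
    by (simp add: sc power2_norm_eq_inner)
  finally have "real M * (norm c)^2 \<le> (\<Sum>m<M. (norm (v m))^2)" by simp
  thus ?thesis using M unfolding c_def[symmetric] by (simp add: field_simps)
qed

lemma norm2_vec: "(norm (v::real^'n))^2 = (\<Sum>i\<in>UNIV. (v $ i)^2)"
  unfolding power2_norm_eq_inner inner_vec_def by (simp add: power2_eq_square)

lemma dnorm2_bounds:
  assumes "\<And>i. a \<le> D $ i" "\<And>i. D $ i \<le> b"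
  shows "a * (norm v)^2 \<le> dnorm2 D v" "dnorm2 D v \<le> b * (norm v)^2"
  unfolding dnorm2_def norm2_vec sum_distrib_left
  by (auto intro!: sum_mono mult_right_mono assms)

lemma dnorm2_nonneg: assumes "\<And>i. 0 \<le> D $ i" shows "0 \<le> dnorm2 D v"
  unfolding dnorm2_def by (auto intro!: sum_nonneg mult_nonneg_nonneg assms)

lemma dnorm2_step:
  assumes "\<And>i. D $ i \<noteq> 0"
  shows "dnorm2 D (u - c *\<^sub>R dinv D g) = dnorm2 D u - 2 * c * (u \<bullet> g) + c^2 * (\<Sum>i\<in>UNIV. (g $ i)^2 / D $ i)"
proof -
  have "dnorm2 D (u - c *\<^sub>R dinv D g) = (\<Sum>i\<in>UNIV. D $ i * (u $ i)^2 - 2 * c * (u $ i * g $ i) + c^2 * ((g $ i)^2 / D $ i))"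
    unfolding dnorm2_def dinv_def using assms
    by (intro sum.cong refl) (simp add: field_simps power2_eq_square)
  thus ?thesis by (simp add: sum.distrib sum_subtractf sum_distrib_left dnorm2_def inner_vec_def)
qed

lemma sum_div_le:
  assumes "0 < a" "\<And>i. a \<le> D $ i"
  shows "(\<Sum>i\<in>UNIV. ((g::real^'n) $ i)^2 / D $ i) \<le> (norm g)^2 / a"
  unfolding norm2_vec sum_divide_distrib
  using assms by (intro sum_mono) (simp add: frac_le)

lemma precond_bd:
  assumes a: "0 < \<alpha>" and D0: "\<And>i. \<alpha> \<le> D0 $ i \<and> D0 $ i \<le> \<Gamma>" and H: "\<And>s i. \<alpha> \<le> H s $ i \<and> H s $ i \<le> \<Gamma>"
    and b: "\<And>s. 0 \<le> \<beta> s \<and> \<beta> s \<le> 1"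
  shows "\<alpha> \<le> precond sq \<beta> D0 H t $ i \<and> precond sq \<beta> D0 H t $ i \<le> \<Gamma>"
proof (induction t arbitrary: i)
  case 0 then show ?case using D0 by simp
next
  case (Suc t)
  let ?p = "precond sq \<beta> D0 H t $ i" and ?h = "H (Suc t) $ i" and ?b = "\<beta> (Suc t)"
  have p: "\<alpha> \<le> ?p" "?p \<le> \<Gamma>" using Suc by auto
  have h: "\<alpha> \<le> ?h" "?h \<le> \<Gamma>" using H by auto
  have bb: "0 \<le> ?b" "?b \<le> 1" using b by auto
  show ?case
  proof (cases sq)
    case True
    have p2: "\<alpha>^2 \<le> ?p^2" "?p^2 \<le> \<Gamma>^2" using p a by (auto intro: power_mono)
    have h2: "\<alpha>^2 \<le> ?h^2" "?h^2 \<le> \<Gamma>^2" using h a by (auto intro: power_mono)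
    have lo: "\<alpha>^2 \<le> ?b * ?p^2 + (1 - ?b) * ?h^2"
    proof -
      have "\<alpha>^2 = ?b * \<alpha>^2 + (1 - ?b) * \<alpha>^2" by (simp add: algebra_simps)
      also have "\<dots> \<le> ?b * ?p^2 + (1 - ?b) * ?h^2" using bb p2 h2 by (intro add_mono mult_left_mono) auto
      finally show ?thesis .
    qed
    have hi: "?b * ?p^2 + (1 - ?b) * ?h^2 \<le> \<Gamma>^2"
    proof -
      have "?b * ?p^2 + (1 - ?b) * ?h^2 \<le> ?b * \<Gamma>^2 + (1 - ?b) * \<Gamma>^2" using bb p2 h2 by (intro add_mono mult_left_mono) auto
      also have "\<dots> = \<Gamma>^2" by (simp add: algebra_simps)
      finally show ?thesis .
    qed
    have G: "0 \<le> \<Gamma>" using p a by linarith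
    have "\<alpha> \<le> sqrt (?b * ?p^2 + (1 - ?b) * ?h^2)" using lo a by (metis less_imp_le real_le_rsqrt)
    moreover have "sqrt (?b * ?p^2 + (1 - ?b) * ?h^2) \<le> \<Gamma>" using hi G by (simp add: real_sqrt_le_iff' real_le_lsqrt)
    ultimately show ?thesis using True by simp
  next
    case False
    have lo: "\<alpha> \<le> ?b * ?p + (1 - ?b) * ?h"
    proof -
      have "\<alpha> = ?b * \<alpha> + (1 - ?b) * \<alpha>" by (simp add: algebra_simps)
      also have "\<dots> \<le> ?b * ?p + (1 - ?b) * ?h" using bb p h by (intro add_mono mult_left_mono) auto
      finally show ?thesis .
    qed
    have hi: "?b * ?p + (1 - ?b) * ?h \<le> \<Gamma>"
    proof -
      have "?b * ?p + (1 - ?b) * ?h \<le> ?b * \<Gamma> + (1 - ?b) * \<Gamma>" using bb p h by (intro add_mono mult_left_mono) auto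
      also have "\<dots> = \<Gamma>" by (simp add: algebra_simps)
      finally show ?thesis .
    qed
    show ?thesis using False lo hi by simp
  qed
qed

lemma avg_savic:
  assumes M: "0 < M"
  shows "avg M (savic_next \<gamma> D M sync xs gs) = avg M xs - \<gamma> *\<^sub>R dinv D (avg M gs)"
proof -
  have dl: "dinv D (\<Sum>m<M. gs m) = (\<Sum>m<M. dinv D (gs m))"
    by (simp add: dinv_def vec_eq_iff sum_divide_distrib)
  have ds: "dinv D (c *\<^sub>R v) = c *\<^sub>R dinv D v" for c v by (simp add: dinv_def vec_eq_iff)
  have core: "(1 / real M) *\<^sub>R (\<Sum>j<M. xs j - \<gamma> *\<^sub>R dinv D (gs j)) = avg M xs - \<gamma> *\<^sub>R dinv D (avg M gs)"
    by (simp add: avg_def sum_subtractf scaleR_sum_right[symmetric] dl ds scaleR_diff_right)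
  show ?thesis
  proof (cases sync)
    case True
    have "avg M (savic_next \<gamma> D M sync xs gs) = avg M (\<lambda>m. (1 / real M) *\<^sub>R (\<Sum>j<M. xs j - \<gamma> *\<^sub>R dinv D (gs j)))"
    proof -
      have "savic_next \<gamma> D M sync xs gs = (\<lambda>m. (1 / real M) *\<^sub>R (\<Sum>j<M. xs j - \<gamma> *\<^sub>R dinv D (gs j)))"
        by (rule ext) (simp add: savic_next_def True)
      thus ?thesis by simp
    qed
    also have "\<dots> = (1 / real M) *\<^sub>R (\<Sum>j<M. xs j - \<gamma> *\<^sub>R dinv D (gs j))"
      unfolding avg_def sum_constant_scaleR using M by simp
    finally show ?thesis using core by simp
  next
    case False
    have "savic_next \<gamma> D M sync xs gs = (\<lambda>m. xs m - \<gamma> *\<^sub>R dinv D (gs m))"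
      by (rule ext) (simp add: savic_next_def False)
    then show ?thesis using core by (simp add: avg_def)
  qed
qed

lemma norm2_add_le: "(norm (x + y))^2 \<le> 2 * (norm x)^2 + 2 * (norm (y::'a::real_normed_vector))^2"
proof -
  have "(norm (x + y))^2 \<le> (norm x + norm y)^2" by (simp add: norm_triangle_ineq power_mono)
  also have "\<dots> \<le> 2 * (norm x)^2 + 2 * (norm y)^2"
  proof -
    have "0 \<le> (norm x - norm y)^2" by simp
    thus ?thesis by (simp add: power2_eq_square algebra_simps)
  qed
  finally show ?thesis .
qed

lemma avg_diff: "(1 / real M) *\<^sub>R (\<Sum>m<M. xs m - c) = avg M xs - c" if "0 < M"
  using that unfolding avg_def sum_subtractf sum_constant_scaleR scaleR_diff_right by simp

lemma grad_bound:
  fixes F :: "nat \<Rightarrow> real^'n \<Rightarrow> real" and Gr :: "nat \<Rightarrow> real^'n \<Rightarrow> real^'n"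
  assumes M: "0 < M" and sc: "\<And>m. m < M \<Longrightarrow> sc_smooth \<mu> L (F m) (Gr m)" and mu: "0 \<le> \<mu>" and L: "0 < L"
  shows "(norm ((1 / real M) *\<^sub>R (\<Sum>m<M. Gr m (xs m))))^2
     \<le> 2 * L^2 * ((1 / real M) * (\<Sum>m<M. (norm (xs m - xh))^2))
       + 8 * L * ((1 / real M) * (\<Sum>m<M. F m xh - F m xs' - Gr m xs' \<bullet> (xh - xs')))
       + 4 / (real M)^2 * (norm (\<Sum>m<M. Gr m xs'))^2"
proof -
  define a where "a = (1 / real M) *\<^sub>R (\<Sum>m<M. Gr m (xs m) - Gr m xh)"
  define c where "c = (1 / real M) *\<^sub>R (\<Sum>m<M. Gr m xh - Gr m xs')"
  define e where "e = (1 / real M) *\<^sub>R (\<Sum>m<M. Gr m xs')"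
  have dec: "(1 / real M) *\<^sub>R (\<Sum>m<M. Gr m (xs m)) = a + (c + e)"
    by (simp add: a_def c_def e_def sum_subtractf algebra_simps)
  have "(norm (a + (c + e)))^2 \<le> 2 * (norm a)^2 + 2 * (norm (c + e))^2" by (rule norm2_add_le)
  also have "\<dots> \<le> 2 * (norm a)^2 + 2 * (2 * (norm c)^2 + 2 * (norm e)^2)"
    using norm2_add_le[of c e] by simp
  finally have s1: "(norm (a + (c + e)))^2 \<le> 2 * (norm a)^2 + 4 * (norm c)^2 + 4 * (norm e)^2" by simp
  have ma: "(norm (Gr m (xs m) - Gr m xh))^2 \<le> L^2 * (norm (xs m - xh))^2" if "m < M" for m
  proof -
    have "(norm (Gr m (xs m) - Gr m xh))^2 \<le> 2 * L * (F m (xs m) - F m xh - Gr m xh \<bullet> (xs m - xh))"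
      by (rule sc_cocoercive[OF sc[OF that] mu L])
    also have "\<dots> \<le> 2 * L * (L / 2 * (norm (xs m - xh))^2)"
      using sc[OF that] L unfolding sc_smooth_def by (intro mult_left_mono) auto
    finally show ?thesis by (simp add: power2_eq_square)
  qed
  have na: "(norm a)^2 \<le> L^2 * ((1 / real M) * (\<Sum>m<M. (norm (xs m - xh))^2))"
  proof -
    have "(norm a)^2 \<le> (1 / real M) * (\<Sum>m<M. (norm (Gr m (xs m) - Gr m xh))^2)"
      unfolding a_def by (rule jensen_norm2[OF M])
    also have "\<dots> \<le> (1 / real M) * (\<Sum>m<M. L^2 * (norm (xs m - xh))^2)"
      using ma by (intro mult_left_mono sum_mono) auto
    finally show ?thesis by (simp add: sum_distrib_left)
  qed
  have nc: "(norm c)^2 \<le> 2 * L * ((1 / real M) * (\<Sum>m<M. F m xh - F m xs' - Gr m xs' \<bullet> (xh - xs')))"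
  proof -
    have "(norm c)^2 \<le> (1 / real M) * (\<Sum>m<M. (norm (Gr m xh - Gr m xs'))^2)"
      unfolding c_def by (rule jensen_norm2[OF M])
    also have "\<dots> \<le> (1 / real M) * (\<Sum>m<M. 2 * L * (F m xh - F m xs' - Gr m xs' \<bullet> (xh - xs')))"
      using sc_cocoercive[OF sc mu L] by (intro mult_left_mono sum_mono) auto
    finally show ?thesis by (simp add: sum_distrib_left)
  qed
  have ne: "(norm e)^2 = 1 / (real M)^2 * (norm (\<Sum>m<M. Gr m xs'))^2"
    unfolding e_def by (simp add: power_mult_distrib power_divide)
  show ?thesis unfolding dec using s1 na nc ne by linarith
qed

lemma cross_bound:
  fixes F :: "nat \<Rightarrow> real^'n \<Rightarrow> real" and Gr :: "nat \<Rightarrow> real^'n \<Rightarrow> real^'n"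
  assumes M: "0 < M" and sc: "\<And>m. m < M \<Longrightarrow> sc_smooth \<mu> L (F m) (Gr m)" and mu: "0 \<le> \<mu>"
    and Db: "\<And>i. D $ i \<le> \<Gamma>" and G: "0 < \<Gamma>"
  shows "(avg M xs - xs') \<bullet> ((1 / real M) *\<^sub>R (\<Sum>m<M. Gr m (xs m)))
     \<ge> (1 / real M) * (\<Sum>m<M. F m (avg M xs) - F m xs') + \<mu> / (2 * \<Gamma>) * dnorm2 D (avg M xs - xs')
       - L / 2 * ((1 / real M) * (\<Sum>m<M. (norm (xs m - avg M xs))^2))"
proof -
  define xh where "xh = avg M xs"
  have pm: "(xh - xs') \<bullet> Gr m (xs m) \<ge> F m xh - F m xs' + \<mu> / 2 * (norm (xs m - xs'))^2 - L / 2 * (norm (xs m - xh))^2"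
    if "m < M" for m
  proof -
    have u1: "F m xh - F m (xs m) - Gr m (xs m) \<bullet> (xh - xs m) \<le> L / 2 * (norm (xh - xs m))^2"
      using sc[OF that] unfolding sc_smooth_def by blast
    have l1: "\<mu> / 2 * (norm (xs' - xs m))^2 \<le> F m xs' - F m (xs m) - Gr m (xs m) \<bullet> (xs' - xs m)"
      using sc[OF that] unfolding sc_smooth_def by blast
    have e: "(xh - xs') \<bullet> Gr m (xs m) = Gr m (xs m) \<bullet> (xh - xs m) - Gr m (xs m) \<bullet> (xs' - xs m)"
      by (simp add: inner_diff_left inner_diff_right inner_commute)
    show ?thesis using u1 l1 unfolding e by (simp add: norm_minus_commute)
  qed
  have "(xh - xs') \<bullet> ((1 / real M) *\<^sub>R (\<Sum>m<M. Gr m (xs m))) = (1 / real M) * (\<Sum>m<M. (xh - xs') \<bullet> Gr m (xs m))"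
    by (simp add: inner_sum_right)
  also have "\<dots> \<ge> (1 / real M) * (\<Sum>m<M. F m xh - F m xs' + \<mu> / 2 * (norm (xs m - xs'))^2 - L / 2 * (norm (xs m - xh))^2)"
    using pm by (intro mult_left_mono sum_mono) auto
  finally have A: "(xh - xs') \<bullet> ((1 / real M) *\<^sub>R (\<Sum>m<M. Gr m (xs m))) \<ge>
     (1 / real M) * (\<Sum>m<M. F m xh - F m xs') + \<mu> / 2 * ((1 / real M) * (\<Sum>m<M. (norm (xs m - xs'))^2))
     - L / 2 * ((1 / real M) * (\<Sum>m<M. (norm (xs m - xh))^2))"
    by (simp add: sum.distrib sum_subtractf sum_distrib_left algebra_simps)
  have J: "(norm (xh - xs'))^2 \<le> (1 / real M) * (\<Sum>m<M. (norm (xs m - xs'))^2)"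
  proof -
    have eq: "(1 / real M) *\<^sub>R (\<Sum>m<M. xs m - xs') = xh - xs'" unfolding xh_def by (rule avg_diff[OF M])
    show ?thesis using jensen_norm2[OF M, of "\<lambda>m. xs m - xs'"] unfolding eq .
  qed
  have "dnorm2 D (xh - xs') \<le> \<Gamma> * (norm (xh - xs'))^2" unfolding dnorm2_def norm2_vec sum_distrib_left by (auto intro!: sum_mono mult_right_mono Db)
  hence "\<mu> * dnorm2 D (xh - xs') \<le> \<mu> * (\<Gamma> * (norm (xh - xs'))^2)" using mu by (rule mult_left_mono)
  hence "\<mu> * dnorm2 D (xh - xs') \<le> \<Gamma> * (\<mu> * (norm (xh - xs'))^2)" by (metis mult.left_commute)
  hence "\<mu> / (2 * \<Gamma>) * dnorm2 D (xh - xs') \<le> \<mu> / 2 * (norm (xh - xs'))^2"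
    using G by (simp add: field_simps)
  also have "\<dots> \<le> \<mu> / 2 * ((1 / real M) * (\<Sum>m<M. (norm (xs m - xs'))^2))" using mult_left_mono[OF J, of "\<mu> / 2"] mu by simp
  finally show ?thesis using A unfolding xh_def by linarith
qed

lemma var_bound:
  fixes X :: "nat \<Rightarrow> 'z \<Rightarrow> real^'n"
  assumes Pr: "\<And>i. i \<in> {..<M} \<Longrightarrow> prob_space (N i)"
    and ig: "\<And>m. m < M \<Longrightarrow> integrable (N m) (X m)"
    and ig2: "\<And>m. m < M \<Longrightarrow> integrable (N m) (\<lambda>z. (norm (X m z))^2)"
    and zero: "(\<Sum>m<M. integral\<^sup>L (N m) (X m)) = 0"
  shows "integrable (PiM {..<M} N) (\<lambda>\<omega>. (norm (\<Sum>m<M. X m (\<omega> m)))^2)"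
    "(\<integral>\<omega>. (norm (\<Sum>m<M. X m (\<omega> m)))^2 \<partial>PiM {..<M} N) \<le> (\<Sum>m<M. \<integral>z. (norm (X m z))^2 \<partial>N m)"
proof -
  let ?P = "PiM {..<M} N"
  define E where "E m = integral\<^sup>L (N m) (X m)" for m
  define A where "A m = (\<integral>z. (norm (X m z))^2 \<partial>N m)" for m
  have expand: "(norm (\<Sum>m<M. X m (\<omega> m)))^2 = (\<Sum>m<M. \<Sum>j<M. X m (\<omega> m) \<bullet> X j (\<omega> j))" for \<omega>
    by (simp add: power2_norm_eq_inner inner_sum_left inner_sum_right) (rule sum.swap)
  have T: "integrable ?P (\<lambda>\<omega>. X m (\<omega> m) \<bullet> X j (\<omega> j)) \<and>
           (\<integral>\<omega>. X m (\<omega> m) \<bullet> X j (\<omega> j) \<partial>?P) = (if m = j then A m else E m \<bullet> E j)"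
    if m: "m < M" and j: "j < M" for m j
  proof (cases "m = j")
    have mI: "m \<in> {..<M}" and jI: "j \<in> {..<M}" using m j by auto
    case True
    have eq: "(\<lambda>\<omega>. X m (\<omega> m) \<bullet> X j (\<omega> j)) = (\<lambda>\<omega>. (\<lambda>z. (norm (X m z))^2) (\<omega> m))"
      using True by (simp add: power2_norm_eq_inner)
    show ?thesis unfolding eq using pim_comp[where I="{..<M}" and N=N and m=m and h="\<lambda>z. (norm (X m z))^2", OF Pr mI ig2[OF m]] m True by (simp add: A_def)
  next
    case False
    have mI: "m \<in> {..<M}" and jI: "j \<in> {..<M}" using m j by auto
    have eq: "(\<lambda>\<omega>. X m (\<omega> m) \<bullet> X j (\<omega> j)) = (\<lambda>\<omega>. \<Sum>b\<in>Basis. (\<lambda>z. X m z \<bullet> b) (\<omega> m) * (\<lambda>z. X j z \<bullet> b) (\<omega> j))"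
      by (rule ext) (rule euclidean_inner)
    have fin: "finite {..<M}" by simp
    have i1: "integrable (N m) (\<lambda>z. X m z \<bullet> b)" for b using ig[OF m] by simp
    have i2: "integrable (N j) (\<lambda>z. X j z \<bullet> b)" for b using ig[OF j] by simp
    note pc = pim_comp2[where I="{..<M}" and N=N and m=m and j=j and ha="\<lambda>z. X m z \<bullet> b" and hb="\<lambda>z. X j z \<bullet> b" for b, OF Pr fin mI jI False i1 i2] 
    have "integrable ?P (\<lambda>\<omega>. \<Sum>b\<in>Basis. (\<lambda>z. X m z \<bullet> b) (\<omega> m) * (\<lambda>z. X j z \<bullet> b) (\<omega> j))"
      using pc(1) m j by (intro Bochner_Integration.integrable_sum) auto
    moreover have "(\<integral>\<omega>. (\<Sum>b\<in>Basis. (\<lambda>z. X m z \<bullet> b) (\<omega> m) * (\<lambda>z. X j z \<bullet> b) (\<omega> j)) \<partial>?P) = E m \<bullet> E j"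
    proof -
      have "(\<integral>\<omega>. (\<Sum>b\<in>Basis. (\<lambda>z. X m z \<bullet> b) (\<omega> m) * (\<lambda>z. X j z \<bullet> b) (\<omega> j)) \<partial>?P)
          = (\<Sum>b\<in>Basis. (\<integral>\<omega>. (\<lambda>z. X m z \<bullet> b) (\<omega> m) * (\<lambda>z. X j z \<bullet> b) (\<omega> j) \<partial>?P))"
        using pc(1) m j by (intro Bochner_Integration.integral_sum) auto
      also have "\<dots> = (\<Sum>b\<in>Basis. (E m \<bullet> b) * (E j \<bullet> b))"
        using pc(2) m j ig[OF m] ig[OF j] by (intro sum.cong refl) (simp add: E_def)
      also have "\<dots> = E m \<bullet> E j" by (rule euclidean_inner[symmetric])
      finally show ?thesis .
    qed
    ultimately show ?thesis unfolding eq using False by simp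
  qed
  have T1: "integrable ?P (\<lambda>\<omega>. X m (\<omega> m) \<bullet> X j (\<omega> j))" if "m < M" "j < M" for m j
    using T[OF that] by blast
  have T2: "(\<integral>\<omega>. X m (\<omega> m) \<bullet> X j (\<omega> j) \<partial>?P) = (if m = j then A m else E m \<bullet> E j)" if "m < M" "j < M" for m j
    using T[OF that] by blast
  have T1s: "integrable ?P (\<lambda>\<omega>. \<Sum>j<M. X m (\<omega> m) \<bullet> X j (\<omega> j))" if "m < M" for m
    apply (rule Bochner_Integration.integrable_sum) using T1[OF that] by simp
  show int: "integrable ?P (\<lambda>\<omega>. (norm (\<Sum>m<M. X m (\<omega> m)))^2)"
    unfolding expand apply (rule Bochner_Integration.integrable_sum) using T1s by simp
  have "(\<integral>\<omega>. (norm (\<Sum>m<M. X m (\<omega> m)))^2 \<partial>?P) = (\<Sum>m<M. \<Sum>j<M. (\<integral>\<omega>. X m (\<omega> m) \<bullet> X j (\<omega> j) \<partial>?P))"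
    unfolding expand
    apply (subst Bochner_Integration.integral_sum) using T1s apply simp
    apply (intro sum.cong refl)
    apply (subst Bochner_Integration.integral_sum) using T1 apply simp
    apply (rule refl)
    done
  also have "\<dots> = (\<Sum>m<M. \<Sum>j<M. E m \<bullet> E j + (if m = j then A m - E m \<bullet> E m else 0))"
    using T2 by (intro sum.cong refl) auto
  also have "\<dots> = (\<Sum>m<M. \<Sum>j<M. E m \<bullet> E j) + (\<Sum>m<M. A m - E m \<bullet> E m)"
    by (simp add: sum.distrib)
  also have "(\<Sum>m<M. \<Sum>j<M. E m \<bullet> E j) = (\<Sum>m<M. E m) \<bullet> (\<Sum>m<M. E m)"
    by (simp add: inner_sum_left inner_sum_right) (rule sum.swap)
  also have "\<dots> = 0" using zero by (simp add: E_def)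
  also have "0 + (\<Sum>m<M. A m - E m \<bullet> E m) \<le> (\<Sum>m<M. A m)"
    by (simp add: sum_subtractf sum_nonneg)
  finally show "(\<integral>\<omega>. (norm (\<Sum>m<M. X m (\<omega> m)))^2 \<partial>?P) \<le> (\<Sum>m<M. \<integral>z. (norm (X m z))^2 \<partial>N m)"
    by (simp add: A_def)
qed

lemma grad_sum_zero:
  fixes F :: "nat \<Rightarrow> real^'n \<Rightarrow> real" and Gr :: "nat \<Rightarrow> real^'n \<Rightarrow> real^'n"
  assumes M: "0 < M" and sc: "\<And>m. m < M \<Longrightarrow> sc_smooth \<mu> L (F m) (Gr m)" and L: "0 < L"
    and mn: "\<And>x. (\<Sum>m<M. F m xs) / real M \<le> (\<Sum>m<M. F m x) / real M"
  shows "(\<Sum>m<M. Gr m xs) = 0"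
proof -
  define Gs where "Gs = (\<Sum>m<M. Gr m xs)"
  define K where "K = real M * L"
  have K: "0 < K" using M L by (simp add: K_def)
  define x where "x = xs - (1 / K) *\<^sub>R Gs"
  have up: "F m x - F m xs - Gr m xs \<bullet> (x - xs) \<le> L / 2 * (norm (x - xs))^2" if "m < M" for m
    using sc[OF that] unfolding sc_smooth_def by blast
  hence "(\<Sum>m<M. F m x - F m xs - Gr m xs \<bullet> (x - xs)) \<le> (\<Sum>m<M. L / 2 * (norm (x - xs))^2)"
    by (intro sum_mono) auto
  hence A: "(\<Sum>m<M. F m x) - (\<Sum>m<M. F m xs) - Gs \<bullet> (x - xs) \<le> real M * (L / 2 * (norm (x - xs))^2)"
    by (simp add: sum_subtractf Gs_def inner_sum_left)
  have B: "(\<Sum>m<M. F m xs) \<le> (\<Sum>m<M. F m x)" using mn[of x] M by (simp add: divide_le_cancel)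
  have C: "Gs \<bullet> (x - xs) = - ((norm Gs)^2 / K)" by (simp add: x_def power2_norm_eq_inner)
  have D: "(norm (x - xs))^2 = (norm Gs)^2 / K^2" using K by (simp add: x_def power_divide)
  from A B have "(norm Gs)^2 / K \<le> real M * (L / 2 * ((norm Gs)^2 / K^2))" unfolding C D by linarith
  also have "\<dots> = (1 / 2) * ((norm Gs)^2 / K)" using K M L by (simp add: K_def field_simps power2_eq_square)
  finally have "(norm Gs)^2 / K \<le> (1 / 2) * ((norm Gs)^2 / K)" .
  hence "(norm Gs)^2 / K \<le> 0" by linarith
  hence "(norm Gs)^2 \<le> 0" using K by (simp add: divide_le_0_iff)
  thus ?thesis unfolding Gs_def by simp
qed

lemma final_arith1:
  fixes Az c Df S V W sg \<gamma> \<mu> \<Gamma> L \<alpha> Mr :: real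
  assumes g: "0 \<le> \<gamma>" and a: "0 < \<alpha>" and G: "0 < \<Gamma>" and Mr: "0 < Mr"
    and c: "c \<ge> Df + \<mu> / (2 * \<Gamma>) * Az - L / 2 * S" and L: "0 \<le> L"
    and SV: "\<alpha> * S \<le> V" and W: "W \<le> Mr * sg"
  shows "Az - 2 * \<gamma> * c + \<gamma>^2 / \<alpha> * (2 * L^2 * S + 8 * L * Df + 4 / Mr^2 * W)
     \<le> (1 - \<gamma> * \<mu> / \<Gamma>) * Az + \<gamma> * L / \<alpha> * (1 + 2 * \<gamma> * L / \<alpha>) * V
       - 2 * \<gamma> * (1 - 4 * \<gamma> * L / \<alpha>) * Df + 4 * \<gamma>^2 * sg / (Mr * \<alpha>)"
proof -
  have ga: "0 \<le> \<gamma>^2 / \<alpha>" using a by simp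
  have h1: "2 * \<gamma> * (Df + \<mu> / (2 * \<Gamma>) * Az - L / 2 * S) \<le> 2 * \<gamma> * c"
    using c g by (intro mult_left_mono) auto
  have h1': "2 * \<gamma> * (Df + \<mu> / (2 * \<Gamma>) * Az - L / 2 * S) = 2 * \<gamma> * Df + \<gamma> * \<mu> / \<Gamma> * Az - \<gamma> * L * S"
    using G by (simp add: field_simps)
  have h2: "\<gamma>^2 / \<alpha> * (4 / Mr^2 * W) \<le> \<gamma>^2 / \<alpha> * (4 / Mr^2 * (Mr * sg))"
    using W ga Mr by (intro mult_left_mono) auto
  have h2': "\<gamma>^2 / \<alpha> * (4 / Mr^2 * (Mr * sg)) = 4 * \<gamma>^2 * sg / (Mr * \<alpha>)"
    using Mr a by (simp add: field_simps power2_eq_square)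
  have S': "S \<le> V / \<alpha>" using SV a by (simp add: field_simps)
  have h3: "\<gamma> * L * S \<le> \<gamma> * L * (V / \<alpha>)" using S' g L by (intro mult_left_mono) auto
  have h4: "\<gamma>^2 / \<alpha> * (2 * L^2) * S \<le> \<gamma>^2 / \<alpha> * (2 * L^2) * (V / \<alpha>)" using S' ga a by (intro mult_left_mono) auto
  have e1: "Az - 2 * \<gamma> * c + \<gamma>^2 / \<alpha> * (2 * L^2 * S + 8 * L * Df + 4 / Mr^2 * W)
     = Az - 2 * \<gamma> * c + \<gamma>^2 / \<alpha> * (2 * L^2) * S + \<gamma>^2 / \<alpha> * (8 * L) * Df + \<gamma>^2 / \<alpha> * (4 / Mr^2 * W)"
    by (simp add: algebra_simps)
  have e2: "(1 - \<gamma> * \<mu> / \<Gamma>) * Az + \<gamma> * L / \<alpha> * (1 + 2 * \<gamma> * L / \<alpha>) * V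
       - 2 * \<gamma> * (1 - 4 * \<gamma> * L / \<alpha>) * Df + 4 * \<gamma>^2 * sg / (Mr * \<alpha>)
     = Az - \<gamma> * \<mu> / \<Gamma> * Az + \<gamma> * L * (V / \<alpha>) + \<gamma>^2 / \<alpha> * (2 * L^2) * (V / \<alpha>)
       - 2 * \<gamma> * Df + \<gamma>^2 / \<alpha> * (8 * L) * Df + 4 * \<gamma>^2 * sg / (Mr * \<alpha>)"
    using a by (simp add: field_simps power2_eq_square)
  show ?thesis unfolding e1 e2 using h1 h1' h2 h2' h3 h4 by linarith
qed

lemma final_arith2:
  fixes V Df \<gamma> L \<alpha> :: real
  assumes g: "0 \<le> \<gamma>" and a: "0 < \<alpha>" and L: "0 < L" and gs: "\<gamma> \<le> \<alpha> / (8 * L)" and V: "0 \<le> V" and D: "0 \<le> Df"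
  shows "\<gamma> * L / \<alpha> * (1 + 2 * \<gamma> * L / \<alpha>) * V \<le> 5 * \<gamma> * L / (4 * \<alpha>) * V"
    "- (2 * \<gamma> * (1 - 4 * \<gamma> * L / \<alpha>) * Df) \<le> - (\<gamma> * Df)"
proof -
  define k where "k = \<gamma> * L / \<alpha>"
  have k0: "0 \<le> k" using g L a by (simp add: k_def)
  have k8: "k \<le> 1 / 8" using gs L a by (simp add: k_def field_simps)
  have "k * (1 + 2 * k) \<le> k * (5 / 4)" using k0 k8 by (intro mult_left_mono) auto
  hence "k * (1 + 2 * k) * V \<le> k * (5 / 4) * V" using V by (rule mult_right_mono)
  thus "\<gamma> * L / \<alpha> * (1 + 2 * \<gamma> * L / \<alpha>) * V \<le> 5 * \<gamma> * L / (4 * \<alpha>) * V"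
    by (simp add: k_def field_simps)
  have "\<gamma> * (8 * k) \<le> \<gamma> * 1" using g k8 by (intro mult_left_mono) auto
  moreover have "2 * \<gamma> * (1 - 4 * k) = 2 * \<gamma> - \<gamma> * (8 * k)" by (simp add: algebra_simps)
  ultimately have "\<gamma> \<le> 2 * \<gamma> * (1 - 4 * k)" by linarith
  hence "\<gamma> * Df \<le> 2 * \<gamma> * (1 - 4 * k) * Df" using D by (rule mult_right_mono)
  thus "- (2 * \<gamma> * (1 - 4 * \<gamma> * L / \<alpha>) * Df) \<le> - (\<gamma> * Df)" by (simp add: k_def mult.assoc)
qed

theorem lemma8:
  fixes M :: nat and \<mu> L \<alpha> \<Gamma> \<gamma> :: real
    and Dist :: "nat \<Rightarrow> 'z measure"
    and fz :: "nat \<Rightarrow> 'z \<Rightarrow> real^'n \<Rightarrow> real" and gz :: "nat \<Rightarrow> 'z \<Rightarrow> real^'n \<Rightarrow> real^'n"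
    and fm :: "nat \<Rightarrow> real^'n \<Rightarrow> real" and Gm :: "nat \<Rightarrow> real^'n \<Rightarrow> real^'n"
    and xstar :: "real^'n"
    and sq :: bool and \<beta> :: "nat \<Rightarrow> real" and D0 :: "real^'n" and H :: "nat \<Rightarrow> real^'n"
    and tp :: "nat \<Rightarrow> nat" and p t :: nat
    and xs :: "nat \<Rightarrow> real^'n"
  defines "Dh \<equiv> clip \<alpha> (precond sq \<beta> D0 H (tp p))"
      and "xh \<equiv> avg M xs"
      and "V \<equiv> (1 / real M) * (\<Sum>m<M. dnorm2 (clip \<alpha> (precond sq \<beta> D0 H (tp p))) (xs m - avg M xs))"
      and "sigma2 \<equiv> (1 / real M) * (\<Sum>m<M. \<integral>z. (norm (gz m z xstar))^2 \<partial>Dist m)"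
      and "Df \<equiv> (1 / real M) * (\<Sum>m<M. fm m (avg M xs)) - (1 / real M) * (\<Sum>m<M. fm m xstar)
               - ((1 / real M) *\<^sub>R (\<Sum>m<M. Gm m xstar)) \<bullet> (avg M xs - xstar)"
  assumes M2: "M \<ge> 2"
    and prob: "\<And>m. m < M \<Longrightarrow> prob_space (Dist m)"
    and meas_f: "\<And>m x. m < M \<Longrightarrow> (\<lambda>z. fz m z x) \<in> borel_measurable (Dist m)"
    and meas_g: "\<And>m x. m < M \<Longrightarrow> (\<lambda>z. gz m z x) \<in> borel_measurable (Dist m)"
    and int_f: "\<And>m x. m < M \<Longrightarrow> integrable (Dist m) (\<lambda>z. fz m z x)"
    and int_g2: "\<And>m x. m < M \<Longrightarrow> integrable (Dist m) (\<lambda>z. (norm (gz m z x))^2)"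
    and fm_exp: "\<And>m x. m < M \<Longrightarrow> fm m x = (\<integral>z. fz m z x \<partial>Dist m)"
    and unbiased: "\<And>m x. m < M \<Longrightarrow> integrable (Dist m) (\<lambda>z. gz m z x) \<and> (\<integral>z. gz m z x \<partial>Dist m) = Gm m x"
    and mu_pos: "0 < \<mu>"
    and fm_sc: "\<And>m. m < M \<Longrightarrow> sc_smooth \<mu> L (fm m) (Gm m)"
    and fz_sc: "\<And>m. m < M \<Longrightarrow> AE z in Dist m. sc_smooth \<mu> L (fz m z) (gz m z)"
    and xstar_min: "\<And>x. (\<Sum>m<M. fm m xstar) / real M \<le> (\<Sum>m<M. fm m x) / real M"
    and alpha_pos: "0 < \<alpha>" and alpha_Gamma: "\<alpha> \<le> \<Gamma>"
    and D0_bd: "\<And>i. \<alpha> \<le> D0 $ i \<and> D0 $ i \<le> \<Gamma>"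
    and H_bd: "\<And>s i. \<alpha> \<le> H s $ i \<and> H s $ i \<le> \<Gamma>"
    and beta_bd: "\<And>s. 0 \<le> \<beta> s \<and> \<beta> s \<le> 1"
    and tp0: "tp 0 = 0" and tp_mono: "strict_mono tp"
    and t_in: "tp p \<le> t" "t < tp (Suc p)"
    and gamma_nonneg: "0 \<le> \<gamma>"
  shows "(\<integral>\<omega>. dnorm2 Dh (avg M (savic_next \<gamma> Dh M (t = tp p) xs (\<lambda>j. gz j (\<omega> j) (xs j))) - xstar)
              \<partial>(PiM {..<M} Dist))
         \<le> (1 - \<gamma> * \<mu> / \<Gamma>) * dnorm2 Dh (xh - xstar)
           + \<gamma> * L / \<alpha> * (1 + 2 * \<gamma> * L / \<alpha>) * V
           - 2 * \<gamma> * (1 - 4 * \<gamma> * L / \<alpha>) * Df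
           + 4 * \<gamma>^2 * sigma2 / (real M * \<alpha>)
       \<and> (\<gamma> \<le> \<alpha> / (8 * L) \<longrightarrow>
          (\<integral>\<omega>. dnorm2 Dh (avg M (savic_next \<gamma> Dh M (t = tp p) xs (\<lambda>j. gz j (\<omega> j) (xs j))) - xstar)
              \<partial>(PiM {..<M} Dist))
         \<le> (1 - \<gamma> * \<mu> / \<Gamma>) * dnorm2 Dh (xh - xstar)
           + 5 * \<gamma> * L / (4 * \<alpha>) * V
           - \<gamma> * Df
           + 4 * \<gamma>^2 * sigma2 / (real M * \<alpha>))"
proof -
  have M0: "0 < M" using M2 by simp
  have Mr: "0 < real M" using M0 by simp
  let ?P = "PiM {..<M} Dist"
  have PrI: "\<And>i. i \<in> {..<M} \<Longrightarrow> prob_space (Dist i)" using prob by auto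
  interpret P: prob_space ?P by (rule prob_space_PiM[OF PrI])
  have Db: "\<alpha> \<le> Dh $ i \<and> Dh $ i \<le> \<Gamma>" for i
  proof -
    have b: "\<alpha> \<le> precond sq \<beta> D0 H (tp p) $ i \<and> precond sq \<beta> D0 H (tp p) $ i \<le> \<Gamma>"
      by (rule precond_bd[OF alpha_pos D0_bd H_bd beta_bd])
    hence "Dh $ i = precond sq \<beta> D0 H (tp p) $ i" using alpha_pos by (simp add: Dh_def clip_def)
    thus ?thesis using b by simp
  qed
  have Dlo: "\<And>i. \<alpha> \<le> Dh $ i" and Dhi: "\<And>i. Dh $ i \<le> \<Gamma>" using Db by auto
  have Dnz: "\<And>i. Dh $ i \<noteq> 0" using Dlo alpha_pos by (metis less_le_trans less_irrefl)
  have Dnn: "\<And>i. 0 \<le> Dh $ i" using Dlo alpha_pos by (meson less_le_trans less_imp_le)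
  have Gpos: "0 < \<Gamma>" using alpha_pos alpha_Gamma by simp
  have muL: "\<mu> \<le> L" by (rule sc_L_ge[OF fm_sc[OF M0]])
  have Lpos: "0 < L" using mu_pos muL by simp
  have mu0: "0 \<le> \<mu>" using mu_pos by simp
  define u where "u = xh - xstar"
  define gb where "gb \<omega> = avg M (\<lambda>j. gz j (\<omega> j) (xs j))" for \<omega> :: "nat \<Rightarrow> 'z"
  define Gb where "Gb = (1 / real M) *\<^sub>R (\<Sum>m<M. Gm m (xs m))"
  define S where "S = (1 / real M) * (\<Sum>m<M. (norm (xs m - xh))^2)"
  define Q where "Q \<omega> = (1 / real M) * (\<Sum>m<M. fz m (\<omega> m) xh - fz m (\<omega> m) xstar - gz m (\<omega> m) xstar \<bullet> (xh - xstar))"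
    for \<omega> :: "nat \<Rightarrow> 'z"
  define W where "W \<omega> = (norm (\<Sum>m<M. gz m (\<omega> m) xstar))^2" for \<omega> :: "nat \<Rightarrow> 'z"
  define R where "R \<omega> = dnorm2 Dh u - 2 * \<gamma> * (u \<bullet> gb \<omega>) + \<gamma>^2 / \<alpha> * (2 * L^2 * S + 8 * L * Q \<omega> + 4 / (real M)^2 * W \<omega>)"
    for \<omega> :: "nat \<Rightarrow> 'z"
  define Ig where "Ig \<omega> = dnorm2 Dh (avg M (savic_next \<gamma> Dh M (t = tp p) xs (\<lambda>j. gz j (\<omega> j) (xs j))) - xstar)"
    for \<omega> :: "nat \<Rightarrow> 'z"
  have zero: "(\<Sum>m<M. Gm m xstar) = 0"
    by (rule grad_sum_zero[OF M0 fm_sc Lpos xstar_min])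
  have Ig1: "Ig \<omega> \<le> dnorm2 Dh u - 2 * \<gamma> * (u \<bullet> gb \<omega>) + \<gamma>^2 / \<alpha> * (norm (gb \<omega>))^2" for \<omega>
  proof -
    have "avg M (savic_next \<gamma> Dh M (t = tp p) xs (\<lambda>j. gz j (\<omega> j) (xs j))) - xstar = u - \<gamma> *\<^sub>R dinv Dh (gb \<omega>)"
      by (simp add: avg_savic[OF M0] u_def xh_def gb_def)
    hence "Ig \<omega> = dnorm2 Dh u - 2 * \<gamma> * (u \<bullet> gb \<omega>) + \<gamma>^2 * (\<Sum>i\<in>UNIV. (gb \<omega> $ i)^2 / Dh $ i)"
      by (simp add: Ig_def dnorm2_step[OF Dnz])
    also have "\<dots> \<le> dnorm2 Dh u - 2 * \<gamma> * (u \<bullet> gb \<omega>) + \<gamma>^2 * ((norm (gb \<omega>))^2 / \<alpha>)"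
      using mult_left_mono[OF sum_div_le[OF alpha_pos Dlo, of "gb \<omega>"], of "\<gamma>^2"] by simp
    finally show ?thesis by simp
  qed
  have AEsc: "AE \<omega> in ?P. \<forall>m\<in>{..<M}. sc_smooth \<mu> L (fz m (\<omega> m)) (gz m (\<omega> m))"
  proof (intro eventually_ball_finite ballI)
    show "finite {..<M}" by simp
    fix m assume m: "m \<in> {..<M}"
    show "AE \<omega> in ?P. sc_smooth \<mu> L (fz m (\<omega> m)) (gz m (\<omega> m))"
      using AE_PiM_component[where I="{..<M}" and M=Dist and i=m and P="\<lambda>z. sc_smooth \<mu> L (fz m z) (gz m z)", OF PrI m] fz_sc m by simp
  qed
  have AEle: "AE \<omega> in ?P. Ig \<omega> \<le> R \<omega>"
    using AEsc
  proof eventually_elim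
    case (elim \<omega>)
    have gbd: "(norm (gb \<omega>))^2 \<le> 2 * L^2 * S + 8 * L * Q \<omega> + 4 / (real M)^2 * W \<omega>"
      using grad_bound[where M=M and F="\<lambda>m. fz m (\<omega> m)" and Gr="\<lambda>m. gz m (\<omega> m)" and \<mu>=\<mu> and L=L and xs=xs and xh=xh and xs'=xstar] elim M0 mu0 Lpos
      by (simp add: gb_def avg_def S_def Q_def W_def)
    have "\<gamma>^2 / \<alpha> * (norm (gb \<omega>))^2 \<le> \<gamma>^2 / \<alpha> * (2 * L^2 * S + 8 * L * Q \<omega> + 4 / (real M)^2 * W \<omega>)"
      using gbd alpha_pos by (intro mult_left_mono) auto
    thus ?case using Ig1[of \<omega>] unfolding R_def by linarith
  qed
  have AE0: "AE \<omega> in ?P. 0 \<le> R \<omega>"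
    using AEle by eventually_elim (use dnorm2_nonneg[OF Dnn] Ig_def in \<open>smt (verit)\<close>)
  have iGm: "integrable ?P (\<lambda>\<omega>. u \<bullet> gz m (\<omega> m) (xs m)) \<and> (\<integral>\<omega>. u \<bullet> gz m (\<omega> m) (xs m) \<partial>?P) = u \<bullet> Gm m (xs m)"
    if m: "m < M" for m
  proof -
    have mI: "m \<in> {..<M}" using m by simp
    have i: "integrable (Dist m) (\<lambda>z. u \<bullet> gz m z (xs m))" using unbiased[OF m] by simp
    have e: "(\<integral>z. u \<bullet> gz m z (xs m) \<partial>Dist m) = u \<bullet> Gm m (xs m)" using unbiased[OF m] by simp
    show ?thesis using pim_comp[where I="{..<M}" and N=Dist and m=m and h="\<lambda>z. u \<bullet> gz m z (xs m)", OF PrI mI i] e by simp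
  qed
  have gb_eq: "u \<bullet> gb \<omega> = (1 / real M) * (\<Sum>m<M. u \<bullet> gz m (\<omega> m) (xs m))" for \<omega>
    by (simp add: gb_def avg_def inner_sum_right)
  have iGB: "integrable ?P (\<lambda>\<omega>. u \<bullet> gb \<omega>)"
    unfolding gb_eq using iGm by (intro integrable_mult_right Bochner_Integration.integrable_sum) auto
  have eGB: "(\<integral>\<omega>. u \<bullet> gb \<omega> \<partial>?P) = u \<bullet> Gb"
  proof -
    have "(\<integral>\<omega>. u \<bullet> gb \<omega> \<partial>?P) = (1 / real M) * (\<Sum>m<M. \<integral>\<omega>. u \<bullet> gz m (\<omega> m) (xs m) \<partial>?P)"
      unfolding gb_eq using iGm by (simp add: Bochner_Integration.integral_sum)
    also have "\<dots> = (1 / real M) * (\<Sum>m<M. u \<bullet> Gm m (xs m))" using iGm by simp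
    also have "\<dots> = u \<bullet> Gb" by (simp add: Gb_def inner_sum_right)
    finally show ?thesis .
  qed
  define Dz where "Dz m z = fz m z xh - fz m z xstar - gz m z xstar \<bullet> (xh - xstar)" for m z
  have iDz: "integrable ?P (\<lambda>\<omega>. Dz m (\<omega> m)) \<and> (\<integral>\<omega>. Dz m (\<omega> m) \<partial>?P) = fm m xh - fm m xstar - Gm m xstar \<bullet> (xh - xstar)"
    if m: "m < M" for m
  proof -
    have mI: "m \<in> {..<M}" using m by simp
    have i: "integrable (Dist m) (Dz m)" unfolding Dz_def using unbiased[OF m] int_f[OF m] by simp
    have e: "integral\<^sup>L (Dist m) (Dz m) = fm m xh - fm m xstar - Gm m xstar \<bullet> (xh - xstar)"
      unfolding Dz_def using unbiased[OF m] int_f[OF m] by (simp add: fm_exp[OF m])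
    show ?thesis using pim_comp[where I="{..<M}" and N=Dist and m=m and h="Dz m", OF PrI mI i] e by simp
  qed
  have Q_eq: "Q \<omega> = (1 / real M) * (\<Sum>m<M. Dz m (\<omega> m))" for \<omega> by (simp add: Q_def Dz_def)
  have iQ: "integrable ?P Q"
    unfolding Q_eq using iDz by (intro integrable_mult_right Bochner_Integration.integrable_sum) auto
  have eQ: "(\<integral>\<omega>. Q \<omega> \<partial>?P) = Df"
  proof -
    have "(\<integral>\<omega>. Q \<omega> \<partial>?P) = (1 / real M) * (\<Sum>m<M. \<integral>\<omega>. Dz m (\<omega> m) \<partial>?P)"
      unfolding Q_eq using iDz by (simp add: Bochner_Integration.integral_sum)
    also have "\<dots> = (1 / real M) * (\<Sum>m<M. fm m xh - fm m xstar - Gm m xstar \<bullet> (xh - xstar))" using iDz by simp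
    also have "\<dots> = Df" by (simp add: Df_def xh_def sum_subtractf inner_sum_left right_diff_distrib)
    finally show ?thesis .
  qed
  have zero': "(\<Sum>m<M. integral\<^sup>L (Dist m) (\<lambda>z. gz m z xstar)) = 0"
    using unbiased zero by simp
  note vb = var_bound[where N=Dist and X="\<lambda>m z. gz m z xstar" and M=M, OF PrI _ _ zero']
  have iW: "integrable ?P W" unfolding W_def using vb(1) unbiased int_g2 by simp
  have eW: "(\<integral>\<omega>. W \<omega> \<partial>?P) \<le> real M * sigma2"
    unfolding W_def sigma2_def using vb(2) unbiased int_g2 Mr by simp
  have iR: "integrable ?P R"
    unfolding R_def using iGB iQ iW by (intro Bochner_Integration.integrable_add Bochner_Integration.integrable_diff integrable_mult_right P.integrable_const)
  have eR: "(\<integral>\<omega>. R \<omega> \<partial>?P) = dnorm2 Dh u - 2 * \<gamma> * (u \<bullet> Gb) + \<gamma>^2 / \<alpha> * (2 * L^2 * S + 8 * L * Df + 4 / (real M)^2 * (\<integral>\<omega>. W \<omega> \<partial>?P))"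
    unfolding R_def using iGB iQ iW eGB eQ by (simp add: P.prob_space)
  have mono: "(\<integral>\<omega>. Ig \<omega> \<partial>?P) \<le> (\<integral>\<omega>. R \<omega> \<partial>?P)" by (rule integral_mono_AE'[OF iR AEle AE0])
  have cr: "u \<bullet> Gb \<ge> (1 / real M) * (\<Sum>m<M. fm m xh - fm m xstar) + \<mu> / (2 * \<Gamma>) * dnorm2 Dh u - L / 2 * S"
    using cross_bound[where M=M and F=fm and Gr=Gm and \<mu>=\<mu> and L=L and D=Dh and \<Gamma>=\<Gamma> and xs=xs and xs'=xstar, OF M0 fm_sc mu0 Dhi Gpos]
    by (simp add: u_def Gb_def S_def xh_def)
  have Df_alt: "Df = (1 / real M) * (\<Sum>m<M. fm m xh - fm m xstar)"
    by (simp add: Df_def zero xh_def sum_subtractf right_diff_distrib)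
  have SV: "\<alpha> * S \<le> V"
  proof -
    have "\<alpha> * S = (1 / real M) * (\<Sum>m<M. \<alpha> * (norm (xs m - xh))^2)" by (simp add: S_def sum_distrib_left)
    also have "\<dots> \<le> (1 / real M) * (\<Sum>m<M. dnorm2 Dh (xs m - xh))"
      using dnorm2_bounds(1)[OF Dlo Dhi] by (intro mult_left_mono sum_mono) auto
    also have "\<dots> = V" by (simp add: V_def Dh_def xh_def)
    finally show ?thesis .
  qed
  have S0: "0 \<le> S" by (simp add: S_def sum_nonneg)
  have V0: "0 \<le> V" using SV S0 alpha_pos by (meson mult_nonneg_nonneg less_imp_le order_trans)
  have Df0: "0 \<le> Df"
  proof -
    have "Df = (1 / real M) * (\<Sum>m<M. fm m xh - fm m xstar - Gm m xstar \<bullet> (xh - xstar))"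
      by (simp add: Df_def xh_def sum_subtractf inner_sum_left right_diff_distrib)
    also have "\<dots> \<ge> 0"
    proof -
      have "0 \<le> fm m xh - fm m xstar - Gm m xstar \<bullet> (xh - xstar)" if "m < M" for m
        using fm_sc[OF that] mu0 unfolding sc_smooth_def
        by (meson order_trans mult_nonneg_nonneg zero_le_divide_iff zero_le_numeral zero_le_power2)
      thus ?thesis by (intro mult_nonneg_nonneg sum_nonneg) auto
    qed
    finally show ?thesis .
  qed
  have main: "(\<integral>\<omega>. Ig \<omega> \<partial>?P) \<le> (1 - \<gamma> * \<mu> / \<Gamma>) * dnorm2 Dh u + \<gamma> * L / \<alpha> * (1 + 2 * \<gamma> * L / \<alpha>) * V
       - 2 * \<gamma> * (1 - 4 * \<gamma> * L / \<alpha>) * Df + 4 * \<gamma>^2 * sigma2 / (real M * \<alpha>)"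
  proof -
    have cr': "u \<bullet> Gb \<ge> Df + \<mu> / (2 * \<Gamma>) * dnorm2 Dh u - L / 2 * S" using cr Df_alt by simp
    have Lnn: "0 \<le> L" using Lpos by simp
    show ?thesis using mono unfolding eR
      using final_arith1[where Az="dnorm2 Dh u" and c="u \<bullet> Gb" and Df=Df and S=S and V=V and W="\<integral>\<omega>. W \<omega> \<partial>?P"
        and sg=sigma2 and \<gamma>=\<gamma> and \<mu>=\<mu> and \<Gamma>=\<Gamma> and L=L and \<alpha>=\<alpha> and Mr="real M", OF gamma_nonneg alpha_pos Gpos Mr cr' Lnn SV eW]
      by linarith
  qed
  have main2: "\<gamma> \<le> \<alpha> / (8 * L) \<Longrightarrow> (\<integral>\<omega>. Ig \<omega> \<partial>?P) \<le> (1 - \<gamma> * \<mu> / \<Gamma>) * dnorm2 Dh u + 5 * \<gamma> * L / (4 * \<alpha>) * V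
       - \<gamma> * Df + 4 * \<gamma>^2 * sigma2 / (real M * \<alpha>)"
    using main final_arith2[OF gamma_nonneg alpha_pos Lpos _ V0 Df0] by linarith
  show ?thesis using main main2 unfolding Ig_def u_def by simp
qed

end
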